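(* (Metatheory of the CPL sequent calculus.) Fix a set $W$ of worlds with a converse well-founded accessibility relation $\prec$. For all contexts $\Gamma,\Gamma'$, worlds $w$, and propositions $A, C$: (i) (Hypothesis / identity) If $A[w] \in \Gamma$, then $\Gamma \Rightarrow A[w]$. (ii) (Generalized weakening) If $\Gamma \subseteq_w \Gamma'$ and $\Gamma \Rightarrow A[w]$, then $\Gamma' \Rightarrow A[w]$. (iii) (Substitution / cut) If $\Gamma \Rightarrow A[w]$ and $\Gamma, A[w] \Rightarrow C[w]$, then $\Gamma \Rightarrow C[w]$.
   Context: Fix a set $W$ of worlds and a binary accessibility relation $\prec$ on $W$ that is converse well-founded: there is no infinite chain $w_0 \prec w_1 \prec w_2 \prec \cdots$ (in particular $\prec$ is irreflexive and acyclic). $\prec^*$ and $\prec^+$ denote the reflexive–transitive and transitive closures. Propositions: $A,B,C ::= Q \mid \bot \mid A \supset B \mid \Diamond A \mid \Box A$, $Q$ ranging over atomic propositions. A context $\Gamma$ is a finite collection of judgments $A[w]$ ($w\in W$). $\Gamma \subseteq_w \Gamma'$ holds iff (a) for all $w'$ with $w \prec^* w'$, $A[w'] \in \Gamma$ implies $A[w'] \in \Gamma'$, and (b) for all $w'$ with $w \prec^+ w'$, $A[w'] \in \Gamma'$ implies $A[w'] \in \Gamma$. The sequent $\Gamma \Rightarrow A[w]$ (sequent calculus for tethered constructive provability logic CPL) is defined one world at a time (provability at $w$ after provability at all $w'$ with $w \prec^+ w'$; well-defined by converse well-foundedness), as the least relation closed under: (init) $\Gamma, Q[w] \Rightarrow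 Q[w]$ for $Q$ atomic. ($\bot L$) If $\bot[w] \in \Gamma$ then $\Gamma \Rightarrow C[w]$. ($\supset R$) If $\Gamma, A[w] \Rightarrow B[w]$ then $\Gamma \Rightarrow A \supset B[w]$. ($\supset L$) If $A \supset B[w] \in \Gamma$, $\Gamma \Rightarrow A[w]$ and $\Gamma, B[w] \Rightarrow C[w]$, then $\Gamma \Rightarrow C[w]$. ($\Diamond R$) If $w \prec w'$ and $\Gamma \Rightarrow A[w']$ then $\Gamma \Rightarrow \Diamond A[w]$. ($\Box R$) If $\Gamma \Rightarrow A[w']$ for every $w'$ with $w \prec w'$, then $\Gamma \Rightarrow \Box A[w]$. ($\Diamond L$) If $\Diamond A[w] \in \Gamma$ and for every $w'$ with $w \prec w'$, $\Gamma \Rightarrow A[w']$ implies $\Gamma \Rightarrow C[w]$, then $\Gamma \Rightarrow C[w]$. ($\Box L$) If $\Box A[w] \in \Gamma$ and ($\Gamma \Rightarrow A[w']$ for all $w'$ with $w \prec w'$) implies $\Gamma \Rightarrow C[w]$, then $\Gamma \Rightarrow C[w]$. *)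

theory Defs
  imports Main
begin

datatype 'a cform = Atom 'a | Bot | Imp "'a cform" "'a cform" | Dia "'a cform" | Box "'a cform"

text \<open>Judgments A[w] are pairs (A, w); contexts are (finite) sets of judgments.
  Worlds are the elements of type 'w; R w w' means w \<prec> w'.\<close>
type_synonym ('a, 'w) ctx = "('a cform \<times> 'w) set"

definition conv_wf :: "('w \<Rightarrow> 'w \<Rightarrow> bool) \<Rightarrow> bool" where
  "conv_wf R \<longleftrightarrow> \<not> (\<exists>f :: nat \<Rightarrow> 'w. \<forall>i. R (f i) (f (Suc i)))"

definition ctx_sub :: "('w \<Rightarrow> 'w \<Rightarrow> bool) \<Rightarrow> 'w \<Rightarrow> ('a, 'w) ctx \<Rightarrow> ('a, 'w) ctx \<Rightarrow> bool" where
  "ctx_sub R w \<Gamma> \<Gamma>' \<longleftrightarrow>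
     (\<forall>A w'. R\<^sup>*\<^sup>* w w' \<longrightarrow> (A, w') \<in> \<Gamma> \<longrightarrow> (A, w') \<in> \<Gamma>') \<and>
     (\<forall>A w'. R\<^sup>+\<^sup>+ w w' \<longrightarrow> (A, w') \<in> \<Gamma>' \<longrightarrow> (A, w') \<in> \<Gamma>)"

text \<open>Provability at a single world w, given provability hi at the worlds above w
  (hi w' \<Gamma> A means \<Gamma> \<Rightarrow> A[w']; only consulted for w \<prec> w').\<close>
inductive seq_step :: "('w \<Rightarrow> 'w \<Rightarrow> bool) \<Rightarrow> ('w \<Rightarrow> ('a, 'w) ctx \<Rightarrow> 'a cform \<Rightarrow> bool)
    \<Rightarrow> 'w \<Rightarrow> ('a, 'w) ctx \<Rightarrow> 'a cform \<Rightarrow> bool"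
  for R :: "'w \<Rightarrow> 'w \<Rightarrow> bool" and hi :: "'w \<Rightarrow> ('a, 'w) ctx \<Rightarrow> 'a cform \<Rightarrow> bool" and w :: 'w
where
  init: "(Atom Q, w) \<in> \<Gamma> \<Longrightarrow> seq_step R hi w \<Gamma> (Atom Q)"
| botL: "(Bot, w) \<in> \<Gamma> \<Longrightarrow> seq_step R hi w \<Gamma> C"
| impR: "seq_step R hi w (insert (A, w) \<Gamma>) B \<Longrightarrow> seq_step R hi w \<Gamma> (Imp A B)"
| impL: "(Imp A B, w) \<in> \<Gamma> \<Longrightarrow> seq_step R hi w \<Gamma> A \<Longrightarrow> seq_step R hi w (insert (B, w) \<Gamma>) C
          \<Longrightarrow> seq_step R hi w \<Gamma> C"
| diaR: "R w w' \<Longrightarrow> hi w' \<Gamma> A \<Longrightarrow> seq_step R hi w \<Gamma> (Dia A)"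
| boxR: "(\<forall>w'. R w w' \<longrightarrow> hi w' \<Gamma> A) \<Longrightarrow> seq_step R hi w \<Gamma> (Box A)"
| diaL: "(Dia A, w) \<in> \<Gamma> \<Longrightarrow> (\<forall>w'. R w w' \<longrightarrow> hi w' \<Gamma> A \<longrightarrow> seq_step R hi w \<Gamma> C)
          \<Longrightarrow> seq_step R hi w \<Gamma> C"
| boxL: "(Box A, w) \<in> \<Gamma> \<Longrightarrow> ((\<forall>w'. R w w' \<longrightarrow> hi w' \<Gamma> A) \<longrightarrow> seq_step R hi w \<Gamma> C)
          \<Longrightarrow> seq_step R hi w \<Gamma> C"

definition seq :: "('w \<Rightarrow> 'w \<Rightarrow> bool) \<Rightarrow> 'w \<Rightarrow> ('a, 'w) ctx \<Rightarrow> 'a cform \<Rightarrow> bool" where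
  "seq R = wfrec {(w', w). R w w'} (\<lambda>f w. seq_step R f w)"

end

theory Submission
  imports Defs
begin

fun rinfo :: "('w \<Rightarrow> 'w \<Rightarrow> bool) \<Rightarrow> 'w \<Rightarrow> ('a, 'w) ctx \<Rightarrow> 'a cform \<Rightarrow> bool" where
  "rinfo R w \<Gamma> (Imp X Y) = seq R w (insert (X, w) \<Gamma>) Y"
| "rinfo R w \<Gamma> (Dia X) = (\<exists>w'. R w w' \<and> seq R w' \<Gamma> X)"
| "rinfo R w \<Gamma> (Box X) = (\<forall>w'. R w w' \<longrightarrow> seq R w' \<Gamma> X)"
| "rinfo R w \<Gamma> (Atom Q) = False"
| "rinfo R w \<Gamma> Bot = False"

lemma seq_step_cong:
  assumes "seq_step R hi w \<Gamma> A" and eq: "\<And>w'. R w w' \<Longrightarrow> hi w' = hi' w'"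
  shows "seq_step R hi' w \<Gamma> A"
  using assms(1)
proof (induction rule: seq_step.induct)
  case (init Q \<Gamma>) then show ?case by (rule seq_step.init)
next
  case (botL \<Gamma> C) then show ?case by (rule seq_step.botL)
next
  case (impR A \<Gamma> B) from impR(2) show ?case by (rule seq_step.impR)
next
  case (impL A B \<Gamma> C) then show ?case by (blast intro: seq_step.impL)
next
  case (diaR w' \<Gamma> A) then show ?case using eq by (metis seq_step.diaR)
next
  case (boxR \<Gamma> A) then show ?case using eq by (metis seq_step.boxR)
next
  case (diaL A \<Gamma> C) then show ?case using eq by (metis seq_step.diaL)
next
  case (boxL A \<Gamma> C) then show ?case using eq by (metis seq_step.boxL)
qed
context
  fixes R :: "'w \<Rightarrow> 'w \<Rightarrow> bool"
  assumes cw: "conv_wf R"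
begin

lemma wfR: "wf {(w', w). R w w'}"
  using cw unfolding conv_wf_def wf_iff_no_infinite_down_chain by auto

lemma acyc: "\<not> R\<^sup>+\<^sup>+ w w"
proof
  assume "R\<^sup>+\<^sup>+ w w"
  have "R\<^sup>+\<^sup>+ a b \<Longrightarrow> (b, a) \<in> {(w', w). R w w'}\<^sup>+" for a b
    by (induction rule: tranclp_induct) (auto intro: trancl_into_trancl2)
  then have "(w, w) \<in> {(w', w). R w w'}\<^sup>+" using \<open>R\<^sup>+\<^sup>+ w w\<close> by blast
  then show False using wf_not_refl[OF wf_trancl[OF wfR]] by blast
qed

lemma seq_unfold: "(seq R w :: ('a, 'w) ctx \<Rightarrow> 'a cform \<Rightarrow> bool) = seq_step R (seq R) w"
proof -
  have "(seq R w :: ('a, 'w) ctx \<Rightarrow> 'a cform \<Rightarrow> bool) = seq_step R (cut (seq R) {(w', w). R w w'} w) w"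
    unfolding seq_def by (subst wfrec[OF wfR]) simp
  moreover have "seq_step R (cut (seq R) {(w', w). R w w'} w) w = (seq_step R (seq R) w :: ('a, 'w) ctx \<Rightarrow> 'a cform \<Rightarrow> bool)"
    apply (intro ext iffI)
     apply (erule seq_step_cong, simp add: cut_def)
    apply (erule seq_step_cong, simp add: cut_def)
    done
  ultimately show ?thesis by simp
qed

lemma ctx_here: "ctx_sub R w \<Gamma> \<Gamma>' \<Longrightarrow> (X, w) \<in> \<Gamma> \<Longrightarrow> (X, w) \<in> \<Gamma>'"
  unfolding ctx_sub_def by blast

lemma ctx_sub_insert: "ctx_sub R w \<Gamma> \<Gamma>' \<Longrightarrow> ctx_sub R w (insert (X, w) \<Gamma>) (insert (X, w) \<Gamma>')"
  unfolding ctx_sub_def using acyc by blast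

lemma ctx_sub_up: "R w w' \<Longrightarrow> ctx_sub R w \<Gamma> \<Gamma>' \<Longrightarrow> ctx_sub R w' \<Gamma> \<Gamma>'"
  unfolding ctx_sub_def
  by (meson converse_rtranclp_into_rtranclp tranclp_into_tranclp2)

lemma ctx_sub_flip: "R w w' \<Longrightarrow> ctx_sub R w \<Gamma> \<Gamma>' \<Longrightarrow> ctx_sub R w' \<Gamma>' \<Gamma>"
  unfolding ctx_sub_def
  by (meson converse_rtranclp_into_rtranclp rtranclp_into_tranclp2 tranclp_into_rtranclp)

lemma ctx_sub_at: "\<Gamma> \<subseteq> \<Gamma>' \<Longrightarrow> (\<forall>p\<in>\<Gamma>'. p \<notin> \<Gamma> \<longrightarrow> snd p = w) \<Longrightarrow> ctx_sub R w \<Gamma> \<Gamma>'"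
  unfolding ctx_sub_def using acyc by fastforce


lemma weak: "seq R w (\<Gamma> :: ('a, 'w) ctx) A \<Longrightarrow> ctx_sub R w \<Gamma> \<Gamma>' \<Longrightarrow> seq R w \<Gamma>' A"
proof (induction w arbitrary: \<Gamma> \<Gamma>' A rule: wf_induct_rule[OF wfR])
  case (1 w)
  have outer: "seq R w' \<Gamma>1 B \<Longrightarrow> ctx_sub R w' \<Gamma>1 \<Gamma>2 \<Longrightarrow> seq R w' \<Gamma>2 B"
    if "R w w'" for w' and \<Gamma>1 \<Gamma>2 :: "('a, 'w) ctx" and B
    using 1(1)[of w'] that by simp
  have "seq_step R (seq R) w \<Gamma> A \<Longrightarrow> ctx_sub R w \<Gamma> \<Gamma>' \<Longrightarrow> seq_step R (seq R) w \<Gamma>' A"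
    for \<Gamma> \<Gamma>' :: "('a, 'w) ctx" and A
  proof (induction arbitrary: \<Gamma>' rule: seq_step.induct)
    case (init Q \<Gamma>) show ?case by (rule seq_step.init, rule ctx_here[OF init(2,1)])
  next
    case (botL \<Gamma> C) show ?case by (rule seq_step.botL, rule ctx_here[OF botL(2,1)])
  next
    case (impR A \<Gamma> B) show ?case by (rule seq_step.impR, rule impR(2), rule ctx_sub_insert[OF impR(3)])
  next
    case (impL A B \<Gamma> C) show ?case
      by (rule seq_step.impL[of A B], rule ctx_here[OF impL(6,1)], rule impL(4)[OF impL(6)],
          rule impL(5), rule ctx_sub_insert[OF impL(6)])
  next
    case (diaR w' \<Gamma> A) show ?case
      by (rule seq_step.diaR[where R=R and w=w, OF diaR(1)], rule outer[OF diaR(1) diaR(2)], rule ctx_sub_up[OF diaR(1,3)])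
  next
    case (boxR \<Gamma> A) show ?case
    proof (rule seq_step.boxR, intro allI impI)
      fix w' assume "R w w'"
      then show "seq R w' \<Gamma>' A" using boxR outer ctx_sub_up by blast
    qed
  next
    case (diaL A \<Gamma> C)
    show ?case
    proof (rule seq_step.diaL)
      show "(Dia A, w) \<in> \<Gamma>'" using ctx_here[OF diaL(3,1)] .
      show "\<forall>w'. R w w' \<longrightarrow> seq R w' \<Gamma>' A \<longrightarrow> seq_step R (seq R) w \<Gamma>' C"
      proof (intro allI impI)
        fix w' assume r: "R w w'" and s: "seq R w' \<Gamma>' A"
        have "seq R w' \<Gamma> A" by (rule outer[OF r s], rule ctx_sub_flip[OF r diaL(3)])
        then show "seq_step R (seq R) w \<Gamma>' C" using diaL(2) r diaL(3) by blast
      qed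
    qed
  next
    case (boxL A \<Gamma> C)
    show ?case
    proof (rule seq_step.boxL)
      show "(Box A, w) \<in> \<Gamma>'" using ctx_here[OF boxL(3,1)] .
      show "(\<forall>w'. R w w' \<longrightarrow> seq R w' \<Gamma>' A) \<longrightarrow> seq_step R (seq R) w \<Gamma>' C"
      proof (intro impI)
        assume s: "\<forall>w'. R w w' \<longrightarrow> seq R w' \<Gamma>' A"
        have "\<forall>w'. R w w' \<longrightarrow> seq R w' \<Gamma> A"
        proof (intro allI impI)
          fix w' assume r: "R w w'"
          show "seq R w' \<Gamma> A" by (rule outer[OF r], rule s[rule_format, OF r], rule ctx_sub_flip[OF r boxL(3)])
        qed
        then show "seq_step R (seq R) w \<Gamma>' C" using boxL(2) boxL(3) by blast
      qed
    qed
  qed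
  then show ?case using 1(2,3) by (simp add: seq_unfold)
qed

lemma su: "seq R w (\<Gamma> :: ('a, 'w) ctx) A = seq_step R (seq R) w \<Gamma> A"
  by (simp add: seq_unfold)

lemma add_here: "ctx_sub R w (\<Gamma> :: ('a, 'w) ctx) (insert (X, w) \<Gamma>)"
  by (rule ctx_sub_at) auto

lemma add_up: "R w w' \<Longrightarrow> ctx_sub R w' (\<Gamma> :: ('a, 'w) ctx) (insert (X, w) \<Gamma>)"
  by (rule ctx_sub_up[OF _ add_here])

lemma drop_up: "R w w' \<Longrightarrow> ctx_sub R w' (insert (X, w) \<Gamma>) (\<Gamma> :: ('a, 'w) ctx)"
  by (rule ctx_sub_flip[OF _ add_here])

lemma rinfo_weak: "rinfo R w (\<Gamma> :: ('a, 'w) ctx) A \<Longrightarrow> ctx_sub R w \<Gamma> \<Gamma>' \<Longrightarrow> rinfo R w \<Gamma>' A"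
proof (cases A)
  case (Imp X Y)
  assume "rinfo R w \<Gamma> A" "ctx_sub R w \<Gamma> \<Gamma>'"
  then show ?thesis using Imp weak ctx_sub_insert by simp blast
next
  case (Dia X)
  assume "rinfo R w \<Gamma> A" "ctx_sub R w \<Gamma> \<Gamma>'"
  then show ?thesis using Dia weak ctx_sub_up by simp blast
next
  case (Box X)
  assume "rinfo R w \<Gamma> A" "ctx_sub R w \<Gamma> \<Gamma>'"
  then show ?thesis using Box weak ctx_sub_up by simp blast
qed auto

lemma rinfo_seq: "rinfo R w (\<Gamma> :: ('a, 'w) ctx) A \<Longrightarrow> seq R w \<Gamma> A"
proof (cases A)
  case (Imp X Y)
  assume "rinfo R w \<Gamma> A"
  then show ?thesis using Imp by (simp add: su seq_step.impR)
next
  case (Dia X)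
  assume "rinfo R w \<Gamma> A"
  then obtain w' where "R w w'" "seq R w' \<Gamma> X" using Dia by auto
  then show ?thesis unfolding Dia by (subst su, rule seq_step.diaR[where R=R and w=w])
next
  case (Box X)
  assume "rinfo R w \<Gamma> A"
  then have "\<forall>w'. R w w' \<longrightarrow> seq R w' \<Gamma> X" using Box by simp
  then show ?thesis unfolding Box by (subst su, rule seq_step.boxR)
qed auto

lemma cutE:
  fixes A :: "'a cform"
  assumes sub: "\<And>B w' (\<Gamma>1 :: ('a, 'w) ctx) C1. size B < size A \<Longrightarrow> seq R w' \<Gamma>1 B
                  \<Longrightarrow> seq R w' (insert (B, w') \<Gamma>1) C1 \<Longrightarrow> seq R w' \<Gamma>1 C1"
  shows "seq_step R (seq R) w \<Delta> C \<Longrightarrow> \<Delta> = insert (A, w) \<Gamma> \<Longrightarrow> rinfo R w \<Gamma> A \<Longrightarrow> seq R w \<Gamma> C"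
proof (induction arbitrary: \<Gamma> rule: seq_step.induct)
  case (init Q \<Delta>)
  show ?case
  proof (cases "A = Atom Q")
    case True then show ?thesis using init by simp
  next
    case False then show ?thesis using init by (simp add: su seq_step.init)
  qed
next
  case (botL \<Delta> C)
  show ?case
  proof (cases "A = Bot")
    case True then show ?thesis using botL by simp
  next
    case False then show ?thesis using botL by (simp add: su seq_step.botL)
  qed
next
  case (impR X \<Delta> B)
  have "seq R w (insert (X, w) \<Gamma>) B"
    by (rule impR(2)) (simp_all add: impR(3) insert_commute rinfo_weak[OF impR(4) add_here])
  then show ?case by (simp add: su seq_step.impR)
next
  case (impL X Y \<Delta> C)
  have sX: "seq R w \<Gamma> X" by (rule impL(4)[OF impL(6,7)])
  have sC: "seq R w (insert (Y, w) \<Gamma>) C"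
    by (rule impL(5)) (simp_all add: impL(6) insert_commute rinfo_weak[OF impL(7) add_here])
  show ?case
  proof (cases "A = Imp X Y")
    case True
    then have h: "seq R w (insert (X, w) \<Gamma>) Y" using impL(7) by simp
    have sY: "seq R w \<Gamma> Y" by (rule sub[OF _ sX h]) (simp add: True)
    show ?thesis by (rule sub[OF _ sY sC]) (simp add: True)
  next
    case False
    then have "(Imp X Y, w) \<in> \<Gamma>" using impL(1,6) by simp
    then show ?thesis by (subst su, rule seq_step.impL[OF _ su[THEN iffD1, OF sX] su[THEN iffD1, OF sC]])
  qed
next
  case (diaR w' \<Delta> B)
  have "seq R w' (insert (A, w) \<Gamma>) B" using diaR(2,3) by simp
  then have "seq R w' \<Gamma> B" using weak drop_up[OF diaR(1)] by blast
  then show ?case by (subst su, rule seq_step.diaR[where R=R and w=w, OF diaR(1)])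
next
  case (boxR \<Delta> B)
  have "\<forall>w'. R w w' \<longrightarrow> seq R w' \<Gamma> B" using weak boxR(1) drop_up boxR(2) by blast
  then show ?case by (subst su, rule seq_step.boxR)
next
  case (diaL X \<Delta> C)
  show ?case
  proof (cases "A = Dia X")
    case True
    then obtain w' where r: "R w w'" and s: "seq R w' \<Gamma> X" using diaL(4) by auto
    have "seq R w' \<Delta> X" using weak[OF s add_up[OF r]] diaL(3) by simp
    then show ?thesis using diaL(2) r diaL(3,4) by blast
  next
    case False
    then have m: "(Dia X, w) \<in> \<Gamma>" using diaL(1,3) by simp
    have "\<forall>w'. R w w' \<longrightarrow> seq R w' \<Gamma> X \<longrightarrow> seq_step R (seq R) w \<Gamma> C"
    proof (intro allI impI)
      fix w' assume r: "R w w'" and s: "seq R w' \<Gamma> X"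
      have "seq R w' \<Delta> X" using weak[OF s add_up[OF r]] diaL(3) by simp
      then have "seq R w \<Gamma> C" using diaL(2) r diaL(3,4) by blast
      then show "seq_step R (seq R) w \<Gamma> C" by (simp add: su)
    qed
    then show ?thesis by (subst su, rule seq_step.diaL[OF m])
  qed
next
  case (boxL X \<Delta> C)
  have up: "\<forall>w'. R w w' \<longrightarrow> seq R w' \<Delta> X" if "\<forall>w'. R w w' \<longrightarrow> seq R w' \<Gamma> X"
    using that weak add_up boxL(3) by blast
  show ?case
  proof (cases "A = Box X")
    case True
    then have "\<forall>w'. R w w' \<longrightarrow> seq R w' \<Gamma> X" using boxL(4) by auto
    then show ?thesis using up boxL(2) boxL(3,4) by blast
  next
    case False
    then have m: "(Box X, w) \<in> \<Gamma>" using boxL(1,3) by simp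
    have "(\<forall>w'. R w w' \<longrightarrow> seq R w' \<Gamma> X) \<longrightarrow> seq_step R (seq R) w \<Gamma> C"
    proof
      assume "\<forall>w'. R w w' \<longrightarrow> seq R w' \<Gamma> X"
      then have "seq R w \<Gamma> C" using up boxL(2) boxL(3,4) by blast
      then show "seq_step R (seq R) w \<Gamma> C" by (simp add: su)
    qed
    then show ?thesis by (subst su, rule seq_step.boxL[OF m])
  qed
qed

lemma cutD:
  fixes A :: "'a cform"
  assumes sub: "\<And>B w' (\<Gamma>1 :: ('a, 'w) ctx) C1. size B < size A \<Longrightarrow> seq R w' \<Gamma>1 B
                  \<Longrightarrow> seq R w' (insert (B, w') \<Gamma>1) C1 \<Longrightarrow> seq R w' \<Gamma>1 C1"
  shows "seq_step R (seq R) w \<Gamma> F \<Longrightarrow> F = A \<Longrightarrow> seq R w (insert (A, w) \<Gamma>) C \<Longrightarrow> seq R w \<Gamma> C"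
proof (induction arbitrary: C rule: seq_step.induct)
  case (init Q \<Gamma>)
  then have "insert (A, w) \<Gamma> = \<Gamma>" by auto
  then show ?case using init(3) by simp
next
  case (botL \<Gamma> F)
  show ?case by (subst su, rule seq_step.botL[OF botL(1)])
next
  case (impR X \<Gamma> Y)
  have ri: "rinfo R w \<Gamma> A" by (simp add: impR(3)[symmetric] su[THEN iffD2, OF impR(1)])
  show ?case by (rule cutE[where A=A, OF _ su[THEN iffD1, OF impR.prems(2)] refl ri]) (rule sub, assumption+)
next
  case (impL X Y \<Gamma> F)
  have "seq R w (insert (A, w) (insert (Y, w) \<Gamma>)) C"
    by (rule weak[OF impL(7)], rule ctx_sub_at) auto
  then have "seq R w (insert (Y, w) \<Gamma>) C" using impL(5,6) by blast
  then show ?case by (subst su, rule seq_step.impL[OF impL(1,2) su[THEN iffD1]])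
next
  case (diaR w' \<Gamma> X)
  have ri: "rinfo R w \<Gamma> A" using diaR(1,2,3) by auto
  show ?case by (rule cutE[where A=A, OF _ su[THEN iffD1, OF diaR.prems(2)] refl ri]) (rule sub, assumption+)
next
  case (boxR \<Gamma> X)
  have ri: "rinfo R w \<Gamma> A" using boxR(1,2) by auto
  show ?case by (rule cutE[where A=A, OF _ su[THEN iffD1, OF boxR.prems(2)] refl ri]) (rule sub, assumption+)
next
  case (diaL X \<Gamma> F)
  have "\<forall>w'. R w w' \<longrightarrow> seq R w' \<Gamma> X \<longrightarrow> seq_step R (seq R) w \<Gamma> C"
  proof (intro allI impI)
    fix w' assume "R w w'" "seq R w' \<Gamma> X"
    then have "seq R w \<Gamma> C" using diaL(2,3,4) by blast
    then show "seq_step R (seq R) w \<Gamma> C" by (rule su[THEN iffD1])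
  qed
  then show ?case by (subst su, rule seq_step.diaL[OF diaL(1)])
next
  case (boxL X \<Gamma> F)
  have "(\<forall>w'. R w w' \<longrightarrow> seq R w' \<Gamma> X) \<longrightarrow> seq_step R (seq R) w \<Gamma> C"
  proof
    assume "\<forall>w'. R w w' \<longrightarrow> seq R w' \<Gamma> X"
    then have "seq R w \<Gamma> C" using boxL(2,3,4) by blast
    then show "seq_step R (seq R) w \<Gamma> C" by (rule su[THEN iffD1])
  qed
  then show ?case by (subst su, rule seq_step.boxL[OF boxL(1)])
qed

lemma cut: "seq R w (\<Gamma> :: ('a, 'w) ctx) A \<Longrightarrow> seq R w (insert (A, w) \<Gamma>) C \<Longrightarrow> seq R w \<Gamma> C"
proof (induction "size A" arbitrary: A w \<Gamma> C rule: less_induct)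
  case less
  show ?case
    by (rule cutD[OF _ su[THEN iffD1, OF less(2)] refl less(3)]) (rule less(1), assumption+)
qed

lemma ident: "(A, w) \<in> (\<Gamma> :: ('a, 'w) ctx) \<Longrightarrow> seq R w \<Gamma> A"
proof (induction A arbitrary: w \<Gamma>)
  case (Atom Q) then show ?case by (subst su, rule seq_step.init)
next
  case Bot then show ?case by (subst su, rule seq_step.botL)
next
  case (Imp X Y)
  have "seq_step R (seq R) w (insert (X, w) \<Gamma>) Y"
  proof (rule seq_step.impL[of X Y])
    show "(Imp X Y, w) \<in> insert (X, w) \<Gamma>" using Imp(3) by simp
    show "seq_step R (seq R) w (insert (X, w) \<Gamma>) X" by (rule su[THEN iffD1], rule Imp(1)) simp
    show "seq_step R (seq R) w (insert (Y, w) (insert (X, w) \<Gamma>)) Y" by (rule su[THEN iffD1], rule Imp(2)) simp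
  qed
  then show ?case by (subst su, rule seq_step.impR)
next
  case (Dia X)
  have "\<forall>w'. R w w' \<longrightarrow> seq R w' \<Gamma> X \<longrightarrow> seq_step R (seq R) w \<Gamma> (Dia X)"
    by (blast intro: seq_step.diaR)
  then show ?case by (subst su, rule seq_step.diaL[OF Dia(2)])
next
  case (Box X)
  have "(\<forall>w'. R w w' \<longrightarrow> seq R w' \<Gamma> X) \<longrightarrow> seq_step R (seq R) w \<Gamma> (Box X)"
    by (blast intro: seq_step.boxR)
  then show ?case by (subst su, rule seq_step.boxL[OF Box(2)])
qed

end

theorem theorem2:
  fixes R :: "'w \<Rightarrow> 'w \<Rightarrow> bool"
  assumes "conv_wf R"
  shows "(\<forall>(\<Gamma> :: ('a, 'w) ctx) A w. finite \<Gamma> \<longrightarrow> (A, w) \<in> \<Gamma> \<longrightarrow> seq R w \<Gamma> A)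
       \<and> (\<forall>(\<Gamma> :: ('a, 'w) ctx) \<Gamma>' A w. finite \<Gamma> \<longrightarrow> finite \<Gamma>' \<longrightarrow>
            ctx_sub R w \<Gamma> \<Gamma>' \<longrightarrow> seq R w \<Gamma> A \<longrightarrow> seq R w \<Gamma>' A)
       \<and> (\<forall>(\<Gamma> :: ('a, 'w) ctx) A C w. finite \<Gamma> \<longrightarrow>
            seq R w \<Gamma> A \<longrightarrow> seq R w (insert (A, w) \<Gamma>) C \<longrightarrow> seq R w \<Gamma> C)"
proof (intro conjI allI impI)
  fix \<Gamma> :: "('a, 'w) ctx" and A w
  assume "(A, w) \<in> \<Gamma>"
  then show "seq R w \<Gamma> A" by (rule ident[OF assms])
next
  fix \<Gamma> \<Gamma>' :: "('a, 'w) ctx" and A w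
  assume c: "ctx_sub R w \<Gamma> \<Gamma>'" and s: "seq R w \<Gamma> A"
  show "seq R w \<Gamma>' A" by (rule weak[OF assms s c])
next
  fix \<Gamma> :: "('a, 'w) ctx" and A C w
  assume "seq R w \<Gamma> A" "seq R w (insert (A, w) \<Gamma>) C"
  then show "seq R w \<Gamma> C" by (rule cut[OF assms])
qed

end
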